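(* With the notation of the context, let $\bm x_\alpha,\bm x_\beta$ be sample points and let $\bm y_0=\bm x_\alpha,\bm y_1,\dots,\bm y_m=\bm x_\beta$ be all the sample points lying on the closed segment $[\bm x_\alpha,\bm x_\beta]$, ordered along the segment, with associated affine functions $v_0,\dots,v_m$ (the local pieces of $u^*$ at these sample points). Assume that for every $r=0,\dots,m-1$, $$\big(v_r(\bm y_r)-v_{r+1}(\bm y_r)\big)\cdot\big(v_r(\bm y_{r+1})-v_{r+1}(\bm y_{r+1})\big)\le 0$$ (this is the termination condition of the bisection procedure that repeatedly inserts midpoints between consecutive sample points on the segment whenever the two signs agree). Then for all sample points $\bm x_i,\bm x_k$ lying on $[\bm x_\alpha,\bm x_\beta]$, $$\min_{j\in J_{\geq,i}}u_j(\bm x_k)\le u_k(\bm x_k)\qquad\text{and}\qquad \max_{j\in J_{\leq,i}}u_j(\bm x_k)\ge u_k(\bm x_k).$$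
   Context: Let $\Omega\subseteq\mathbb{R}^{n_x}$ be a convex polyhedron and $u^*:\Omega\to\mathbb{R}$ a continuous piecewise affine (PWA) function: $\Omega$ is the union of finitely many closed convex polyhedra (local regions) with pairwise disjoint interiors, and on each local region $u^*$ coincides with an affine function (its local piece). Sample points $\bm x_1,\dots,\bm x_{N_s}\in\Omega$ are given, each lying in the interior of a unique order (UO) region $\Gamma(\bm x_i)$ (a closed polyhedron inside a local region on whose interior the order of all distinct local pieces of $u^*$ is constant; equivalently, no two distinct local pieces of $u^*$ take equal values at $\bm x_i$), and $u_i$ denotes the local piece of $u^*$ on $\Gamma(\bm x_i)$, so $u_i(\bm x_i)=u^*(\bm x_i)$. Define $J_{\geq,i}=\{j\in\{1,\dots,N_s\}: u_j(\bm x_i)\ge u_i(\bm x_i)\}$ and $J_{\leq,i}=\{j\in\{1,\dots,N_s\}: u_j(\bm x_i)\le u_i(\bm x_i)\}$. *)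

theory Defs
  imports "HOL-Analysis.Analysis"
begin

definition affine_fun :: "('a::euclidean_space \<Rightarrow> real) \<Rightarrow> bool" where
  "affine_fun f \<longleftrightarrow> (\<exists>c d. \<forall>x. f x = inner c x + d)"

definition is_cont_pwa ::
  "'a::euclidean_space set \<Rightarrow> ('a \<Rightarrow> real) \<Rightarrow> nat \<Rightarrow> (nat \<Rightarrow> 'a set) \<Rightarrow> (nat \<Rightarrow> 'a \<Rightarrow> real) \<Rightarrow> bool" where
  "is_cont_pwa \<Omega> u L R p \<longleftrightarrow>
     continuous_on \<Omega> u \<and>
     \<Omega> = (\<Union>l<L. R l) \<and>
     (\<forall>l<L. polyhedron (R l) \<and> convex (R l) \<and> closed (R l) \<and> affine_fun (p l) \<and>
            (\<forall>x\<in>R l. u x = p l x)) \<and>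
     (\<forall>l1<L. \<forall>l2<L. l1 \<noteq> l2 \<longrightarrow> interior (R l1) \<inter> interior (R l2) = {})"

definition uo_region ::
  "'a::euclidean_space set \<Rightarrow> nat \<Rightarrow> (nat \<Rightarrow> 'a set) \<Rightarrow> (nat \<Rightarrow> 'a \<Rightarrow> real) \<Rightarrow> bool" where
  "uo_region \<Gamma> L R p \<longleftrightarrow>
     closed \<Gamma> \<and> polyhedron \<Gamma> \<and> (\<exists>l<L. \<Gamma> \<subseteq> R l) \<and>
     (\<forall>y\<in>interior \<Gamma>. \<forall>z\<in>interior \<Gamma>. \<forall>l1<L. \<forall>l2<L.
        (p l1 y \<le> p l2 y \<longleftrightarrow> p l1 z \<le> p l2 z))"

definition J_ge :: "nat \<Rightarrow> (nat \<Rightarrow> 'a) \<Rightarrow> (nat \<Rightarrow> 'a \<Rightarrow> real) \<Rightarrow> nat \<Rightarrow> nat set" where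
  "J_ge Ns x uu i = {j \<in> {1..Ns}. uu j (x i) \<ge> uu i (x i)}"

definition J_le :: "nat \<Rightarrow> (nat \<Rightarrow> 'a) \<Rightarrow> (nat \<Rightarrow> 'a \<Rightarrow> real) \<Rightarrow> nat \<Rightarrow> nat set" where
  "J_le Ns x uu i = {j \<in> {1..Ns}. uu j (x i) \<le> uu i (x i)}"

end

theory Submission
  imports Defs
begin

lemma affine_root:
  fixes A B ta tb :: real
  assumes "(A * ta + B) * (A * tb + B) \<le> 0" "ta \<le> tb"
  shows "\<exists>c. ta \<le> c \<and> c \<le> tb \<and> A * c + B = 0"
proof -
  have cont: "continuous_on {ta..tb} (\<lambda>s. A * s + B)" by (intro continuous_intros)
  from assms(1) have "(0 \<le> A * ta + B \<and> A * tb + B \<le> 0) \<or> (A * ta + B \<le> 0 \<and> 0 \<le> A * tb + B)"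
    by (simp only: mult_le_0_iff)
  then show ?thesis
  proof
    assume h: "0 \<le> A * ta + B \<and> A * tb + B \<le> 0"
    show ?thesis using IVT2'[of "\<lambda>s. A * s + B" tb 0 ta, OF _ _ assms(2) cont] h by simp
  next
    assume h: "A * ta + B \<le> 0 \<and> 0 \<le> A * tb + B"
    show ?thesis using IVT'[of "\<lambda>s. A * s + B" ta 0 tb, OF _ _ assms(2) cont] h by simp
  qed
qed

lemma chain_mono:
  fixes t :: "nat \<Rightarrow> real"
  assumes "\<forall>r<m. t r \<le> t (Suc r)" "a \<le> b" "b \<le> m"
  shows "t a \<le> t b"
  using assms(2,3)
proof (induction b)
  case 0 then show ?case by simp
next
  case (Suc b)
  show ?case
  proof (cases "a = Suc b")
    case False
    then have "t a \<le> t b" using Suc by simp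
    moreover have "t b \<le> t (Suc b)" using assms(1) Suc.prems by simp
    ultimately show ?thesis by linarith
  qed simp
qed

lemma chain_main:
  fixes t :: "nat \<Rightarrow> real" and g :: "nat \<Rightarrow> real \<Rightarrow> real"
  assumes aff: "\<forall>r\<le>m. \<exists>A B. \<forall>s. g r s = A * s + B"
    and mono: "\<forall>r<m. t r \<le> t (Suc r)"
    and cond: "\<forall>r<m. (g r (t r) - g (Suc r) (t r)) * (g r (t (Suc r)) - g (Suc r) (t (Suc r))) \<le> 0"
    and bm: "b \<le> m"
  shows "a \<le> b \<Longrightarrow> s \<le> t a \<Longrightarrow> \<exists>j\<le>m. g j s \<ge> g a s \<and> g j (t b) \<le> g b (t b)"
proof (induction "b - a" arbitrary: a s)
  case 0
  then show ?case using bm by (intro exI[of _ b]) auto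
next
  case (Suc d)
  then have ab: "a < b" by simp
  show ?case
  proof (cases "g a (t b) \<le> g b (t b)")
    case True then show ?thesis using ab bm by (intro exI[of _ a]) auto
  next
    case False
    have am: "a < m" using ab bm by simp
    obtain A1 B1 where g1: "\<forall>s. g a s = A1 * s + B1" using aff am less_imp_le by blast
    obtain A2 B2 where g2: "\<forall>s. g (Suc a) s = A2 * s + B2" using aff am by (metis Suc_leI)
    have "((A1-A2) * t a + (B1-B2)) * ((A1-A2) * t (Suc a) + (B1-B2)) \<le> 0"
    proof -
      have e1: "g a (t a) - g (Suc a) (t a) = (A1-A2) * t a + (B1-B2)" using g1 g2 by (simp add: algebra_simps)
      have e2: "g a (t (Suc a)) - g (Suc a) (t (Suc a)) = (A1-A2) * t (Suc a) + (B1-B2)" using g1 g2 by (simp add: algebra_simps)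
      show ?thesis using cond am unfolding e1[symmetric] e2[symmetric] by blast
    qed
    then obtain c where c: "t a \<le> c" "c \<le> t (Suc a)" "(A1-A2) * c + (B1-B2) = 0"
      using affine_root[of "A1-A2" "t a" "B1-B2" "t (Suc a)"] mono am by auto
    have gc: "g a c = g (Suc a) c" using c(3) g1 g2 by (simp add: algebra_simps)
    have "d = b - Suc a" using Suc by simp
    from Suc.hyps(1)[OF this _ c(2)] ab
    obtain j where j: "j \<le> m" "g j c \<ge> g (Suc a) c" "g j (t b) \<le> g b (t b)" by auto
    have "t (Suc a) \<le> t b" using chain_mono[OF mono, of "Suc a" b] ab bm by simp
    then have "c \<le> t b" using c(2) by linarith
    moreover have "c \<noteq> t b"
    proof
      assume "c = t b"
      then have "g j (t b) \<ge> g a (t b)" using j(2) gc by simp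
      then show False using j(3) False by linarith
    qed
    ultimately have ctb: "c < t b" by linarith
    obtain A3 B3 where g3: "\<forall>s. g j s = A3 * s + B3" using aff j(1) by blast
    have h1: "A3 * c + B3 \<ge> A1 * c + B1" using j(2) gc g1 g3 by simp
    have h2: "A3 * t b + B3 < A1 * t b + B1" using j(3) False g1 g3 by simp
    have "(A3 - A1) * (t b - c) < 0" using h1 h2 by (simp add: algebra_simps)
    then have "A3 - A1 < 0" using ctb by (simp add: mult_less_0_iff)
    moreover have "s \<le> c" using Suc.prems c(1) by simp
    ultimately have "(A3 - A1) * (s - c) \<ge> 0" by (simp add: mult_nonpos_nonpos)
    then have "A3 * s + B3 \<ge> A1 * s + B1" using h1 by (simp add: algebra_simps)
    then show ?thesis
    proof (intro exI[of _ j] conjI)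
      show "j \<le> m" by (rule j(1))
      show "g j (t b) \<le> g b (t b)" by (rule j(3))
    qed (simp add: g1 g3)
  qed
qed

lemma chain_min:
  fixes t :: "nat \<Rightarrow> real" and g :: "nat \<Rightarrow> real \<Rightarrow> real"
  assumes aff: "\<forall>r\<le>m. \<exists>A B. \<forall>s. g r s = A * s + B"
    and mono: "\<forall>r<m. t r \<le> t (Suc r)"
    and cond: "\<forall>r<m. (g r (t r) - g (Suc r) (t r)) * (g r (t (Suc r)) - g (Suc r) (t (Suc r))) \<le> 0"
    and am: "a \<le> m" and bm: "b \<le> m"
  shows "\<exists>j\<le>m. g j (t a) \<ge> g a (t a) \<and> g j (t b) \<le> g b (t b)"
proof (cases "a \<le> b")
  case True
  then show ?thesis using chain_main[OF aff mono cond bm True, of "t a"] by simp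
next
  case False
  define t' where "t' r = - t (m - r)" for r
  define g' where "g' r s = g (m - r) (- s)" for r s
  have aff': "\<forall>r\<le>m. \<exists>A B. \<forall>s. g' r s = A * s + B"
  proof (intro allI impI)
    fix r assume "r \<le> m"
    then obtain A B where "\<forall>s. g (m - r) s = A * s + B" using aff by (meson diff_le_self)
    then have "\<forall>s. g' r s = (-A) * s + B" by (simp add: g'_def)
    then show "\<exists>A B. \<forall>s. g' r s = A * s + B" by blast
  qed
  have mono': "\<forall>r<m. t' r \<le> t' (Suc r)"
  proof (intro allI impI)
    fix r assume r: "r < m"
    then have "m - r = Suc (m - Suc r)" "m - Suc r < m" by auto
    then show "t' r \<le> t' (Suc r)" using mono unfolding t'_def by (metis neg_le_iff_le)
  qed
  have cond': "\<forall>r<m. (g' r (t' r) - g' (Suc r) (t' r)) * (g' r (t' (Suc r)) - g' (Suc r) (t' (Suc r))) \<le> 0"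
  proof (intro allI impI)
    fix r assume r: "r < m"
    define q where "q = m - Suc r"
    have q: "m - r = Suc q" "q < m" "m - Suc r = q" using r by (auto simp: q_def)
    have "(g q (t q) - g (Suc q) (t q)) * (g q (t (Suc q)) - g (Suc q) (t (Suc q))) \<le> 0"
      using cond q(2) by blast
    then show "(g' r (t' r) - g' (Suc r) (t' r)) * (g' r (t' (Suc r)) - g' (Suc r) (t' (Suc r))) \<le> 0"
      unfolding g'_def t'_def q by (simp add: algebra_simps)
  qed
  have "m - a \<le> m - b" using False by simp
  from chain_main[OF aff' mono' cond' _ this, of "t' (m - a)"]
  obtain j where j: "j \<le> m" "g' j (t' (m - a)) \<ge> g' (m - a) (t' (m - a))"
    "g' j (t' (m - b)) \<le> g' (m - b) (t' (m - b))" by auto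
  have e: "m - (m - a) = a" "m - (m - b) = b" using am bm by auto
  show ?thesis
    using j e by (intro exI[of _ "m - j"]) (simp add: g'_def t'_def)
qed

lemma chain_both:
  fixes t :: "nat \<Rightarrow> real" and g :: "nat \<Rightarrow> real \<Rightarrow> real"
  assumes aff: "\<forall>r\<le>m. \<exists>A B. \<forall>s. g r s = A * s + B"
    and mono: "\<forall>r<m. t r \<le> t (Suc r)"
    and cond: "\<forall>r<m. (g r (t r) - g (Suc r) (t r)) * (g r (t (Suc r)) - g (Suc r) (t (Suc r))) \<le> 0"
    and am: "a \<le> m" and bm: "b \<le> m"
  shows "\<exists>j\<le>m. g j (t a) \<le> g a (t a) \<and> g j (t b) \<ge> g b (t b)"
proof -
  define h where "h r s = - g r s" for r s
  have aff': "\<forall>r\<le>m. \<exists>A B. \<forall>s. h r s = A * s + B"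
  proof (intro allI impI)
    fix r assume "r \<le> m"
    then obtain A B where "\<forall>s. g r s = A * s + B" using aff by blast
    then have "\<forall>s. h r s = (-A) * s + (-B)" by (simp add: h_def)
    then show "\<exists>A B. \<forall>s. h r s = A * s + B" by blast
  qed
  have cond': "\<forall>r<m. (h r (t r) - h (Suc r) (t r)) * (h r (t (Suc r)) - h (Suc r) (t (Suc r))) \<le> 0"
    using cond unfolding h_def by (simp add: algebra_simps)
  show ?thesis using chain_min[OF aff' mono cond' am bm] unfolding h_def by auto
qed

theorem mainTheorem4:
  fixes \<Omega> :: "'a::euclidean_space set"
    and ustar :: "'a \<Rightarrow> real"
    and L :: nat and R :: "nat \<Rightarrow> 'a set" and p :: "nat \<Rightarrow> 'a \<Rightarrow> real"
    and Ns :: nat and x :: "nat \<Rightarrow> 'a" and uu :: "nat \<Rightarrow> 'a \<Rightarrow> real"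
    and \<alpha> \<beta> m :: nat and y :: "nat \<Rightarrow> nat"
  assumes \<Omega>_poly: "convex \<Omega>" "polyhedron \<Omega>"
    and pwa: "is_cont_pwa \<Omega> ustar L R p"
    and samples: "\<forall>i\<in>{1..Ns}. x i \<in> \<Omega> \<and>
        (\<exists>\<Gamma> l. l < L \<and> uo_region \<Gamma> L R p \<and> \<Gamma> \<subseteq> R l \<and> x i \<in> interior \<Gamma> \<and> uu i = p l)"
    and ab: "\<alpha> \<in> {1..Ns}" "\<beta> \<in> {1..Ns}"
    and y_enum: "bij_betw y {0..m} {i \<in> {1..Ns}. x i \<in> closed_segment (x \<alpha>) (x \<beta>)}"
    and y_ends: "y 0 = \<alpha>" "y m = \<beta>"
    and y_ord: "\<forall>r<m. dist (x \<alpha>) (x (y r)) \<le> dist (x \<alpha>) (x (y (Suc r)))"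
    and term_cond: "\<forall>r<m.
        (uu (y r) (x (y r)) - uu (y (Suc r)) (x (y r))) *
        (uu (y r) (x (y (Suc r))) - uu (y (Suc r)) (x (y (Suc r)))) \<le> 0"
  shows "\<forall>i\<in>{1..Ns}. \<forall>k\<in>{1..Ns}.
           x i \<in> closed_segment (x \<alpha>) (x \<beta>) \<and> x k \<in> closed_segment (x \<alpha>) (x \<beta>) \<longrightarrow>
           Min ((\<lambda>j. uu j (x k)) ` J_ge Ns x uu i) \<le> uu k (x k) \<and>
           Max ((\<lambda>j. uu j (x k)) ` J_le Ns x uu i) \<ge> uu k (x k)"
proof (intro ballI impI)
  fix i k assume i: "i \<in> {1..Ns}" and k: "k \<in> {1..Ns}"
    and seg: "x i \<in> closed_segment (x \<alpha>) (x \<beta>) \<and> x k \<in> closed_segment (x \<alpha>) (x \<beta>)"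
  define P where "P = x \<alpha>"
  define Q where "Q = x \<beta>"
  define t where "t r = dist P (x (y r)) / norm (Q - P)" for r
  define g where "g r s = uu (y r) (P + s *\<^sub>R (Q - P))" for r s
  have yin: "y r \<in> {1..Ns}" "x (y r) \<in> closed_segment P Q" if "r \<le> m" for r
    using bij_betw_apply[OF y_enum, of r] that unfolding P_def Q_def by auto
  have uaff: "\<exists>c d. \<forall>z. uu j z = inner c z + d" if "j \<in> {1..Ns}" for j
  proof -
    have "\<exists>\<Gamma> l. l < L \<and> uo_region \<Gamma> L R p \<and> \<Gamma> \<subseteq> R l \<and> x j \<in> interior \<Gamma> \<and> uu j = p l"
      using samples that by simp
    then obtain \<Gamma> l where l: "l < L" "uu j = p l" by blast
    have pl: "\<forall>l<L. polyhedron (R l) \<and> convex (R l) \<and> closed (R l) \<and> affine_fun (p l) \<and>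
            (\<forall>x\<in>R l. ustar x = p l x)"
      using pwa unfolding is_cont_pwa_def by (elim conjE)
    have "affine_fun (p l)" using pl l(1) by simp
    then show ?thesis using l unfolding affine_fun_def by simp
  qed
  have xt: "x (y r) = P + t r *\<^sub>R (Q - P)" if rm: "r \<le> m" for r
  proof -
    obtain u where u: "0 \<le> u" "u \<le> 1" "x (y r) = (1 - u) *\<^sub>R P + u *\<^sub>R Q"
      using yin(2)[OF rm] unfolding closed_segment_def by auto
    have e: "x (y r) = P + u *\<^sub>R (Q - P)" using u(3) by (simp add: algebra_simps)
    show ?thesis
    proof (cases "Q = P")
      case True then show ?thesis using e by simp
    next
      case False
      have "dist P (x (y r)) = u * norm (Q - P)" using e u(1) by (simp add: dist_norm)
      then have "t r = u" using False unfolding t_def by simp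
      then show ?thesis using e by simp
    qed
  qed
  have aff: "\<forall>r\<le>m. \<exists>A B. \<forall>s. g r s = A * s + B"
  proof (intro allI impI)
    fix r assume r: "r \<le> m"
    obtain c d where cd: "\<forall>z. uu (y r) z = inner c z + d" using uaff yin(1)[OF r] by blast
    have "\<forall>s. g r s = inner c (Q - P) * s + (inner c P + d)"
      using cd unfolding g_def by (simp add: inner_add_right inner_diff_right algebra_simps)
    then show "\<exists>A B. \<forall>s. g r s = A * s + B" by blast
  qed
  have mono: "\<forall>r<m. t r \<le> t (Suc r)"
    using y_ord unfolding t_def P_def by (simp add: divide_right_mono)
  have gt: "g r (t q) = uu (y r) (x (y q))" if "q \<le> m" for r q
    using xt[OF that] unfolding g_def by simp
  have cond: "\<forall>r<m. (g r (t r) - g (Suc r) (t r)) * (g r (t (Suc r)) - g (Suc r) (t (Suc r))) \<le> 0"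
    using term_cond by (simp add: gt)
  have "i \<in> y ` {0..m}" "k \<in> y ` {0..m}"
    using bij_betw_imp_surj_on[OF y_enum] i k seg by auto
  then obtain a b where a: "a \<le> m" "i = y a" and b: "b \<le> m" "k = y b" by auto
  obtain j1 where j1: "j1 \<le> m" "g j1 (t a) \<ge> g a (t a)" "g j1 (t b) \<le> g b (t b)"
    using chain_min[OF aff mono cond a(1) b(1)] by blast
  obtain j2 where j2: "j2 \<le> m" "g j2 (t a) \<le> g a (t a)" "g j2 (t b) \<ge> g b (t b)"
    using chain_both[OF aff mono cond a(1) b(1)] by blast
  have fin1: "finite (J_ge Ns x uu i)" unfolding J_ge_def by simp
  have fin2: "finite (J_le Ns x uu i)" unfolding J_le_def by simp
  have m1: "y j1 \<in> J_ge Ns x uu i"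
    using j1 yin(1)[OF j1(1)] unfolding J_ge_def a(2) by (simp add: gt a(1))
  have m2: "y j2 \<in> J_le Ns x uu i"
    using j2 yin(1)[OF j2(1)] unfolding J_le_def a(2) by (simp add: gt a(1))
  have "Min ((\<lambda>j. uu j (x k)) ` J_ge Ns x uu i) \<le> uu (y j1) (x k)"
    using fin1 m1 by (intro Min_le) auto
  also have "\<dots> \<le> uu k (x k)" using j1(3) unfolding b(2) by (simp add: gt b(1))
  finally have r1: "Min ((\<lambda>j. uu j (x k)) ` J_ge Ns x uu i) \<le> uu k (x k)" .
  have "uu k (x k) \<le> uu (y j2) (x k)" using j2(3) unfolding b(2) by (simp add: gt b(1))
  also have "\<dots> \<le> Max ((\<lambda>j. uu j (x k)) ` J_le Ns x uu i)"
    using fin2 m2 by (intro Max_ge) auto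
  finally show "Min ((\<lambda>j. uu j (x k)) ` J_ge Ns x uu i) \<le> uu k (x k) \<and>
           Max ((\<lambda>j. uu j (x k)) ` J_le Ns x uu i) \<ge> uu k (x k)" using r1 by simp
qed

end
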